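(* Let $R$ be an associative ring and let $X$ be a finite set of unknowns. Consider a finite system of equations over $R$, each of the form $\sum_i\prod_j c_{ij}x_{ij}^{k_{ij}}=0$ (finitely many summands, called monomials, each a finite product) with $c_{ij}\in R$, $x_{ij}\in X$, $k_{ij}\in\mathbb{Z}$. If $$\sum_{\text{equations}}\big((\text{number of monomials in the equation})-1\big)<|X|,$$ then the system is generalised homogeneous.
   Context: A system of such equations is generalised homogeneous if there is a nonzero map $\deg: X\to\mathbb{Z}$ such that, for each equation, the value $\sum_j k_{ij}\deg(x_{ij})$ (the degree of the $i$-th monomial) does not depend on $i$ (the common value may differ from equation to equation, but the same map $\deg$ is used for all equations). *)

theory Defs
  imports Main
begin

text \<open>A monomial c_1 x_1^{k_1} ... c_m x_m^{k_m} over a ring 'r in unknowns of type 'x is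
  represented by the list of its factors (c_j, x_j, k_j).  An equation
  sum_i monomial_i = 0 is represented by the list of its monomials, and a finite
  system by the list of its equations.\<close>

type_synonym ('r, 'x) monomial = "('r \<times> 'x \<times> int) list"
type_synonym ('r, 'x) equation = "('r, 'x) monomial list"

definition monomial_vars :: "('r, 'x) monomial \<Rightarrow> 'x set" where
  "monomial_vars m = (\<lambda>(c, x, k). x) ` set m"

definition monomial_degree :: "('x \<Rightarrow> int) \<Rightarrow> ('r, 'x) monomial \<Rightarrow> int" where
  "monomial_degree deg m = (\<Sum>(c, x, k) \<leftarrow> m. k * deg x)"

definition gen_homogeneous :: "'x set \<Rightarrow> ('r, 'x) equation list \<Rightarrow> bool" where
  "gen_homogeneous X sys \<longleftrightarrow>
     (\<exists>deg :: 'x \<Rightarrow> int. (\<exists>x\<in>X. deg x \<noteq> 0) \<and>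
        (\<forall>e \<in> set sys. \<forall>m1 \<in> set e. \<forall>m2 \<in> set e.
            monomial_degree deg m1 = monomial_degree deg m2))"

end

theory Submission
  imports Defs
begin

lemma lin_solve:
  fixes fs :: "('x \<Rightarrow> int) list"
  assumes "finite X" "length fs < card X"
  shows "\<exists>d. (\<exists>x\<in>X. d x \<noteq> 0) \<and> (\<forall>y. y \<notin> X \<longrightarrow> d y = 0) \<and>
        (\<forall>g\<in>set fs. (\<Sum>y\<in>X. g y * d y) = 0)"
  using assms
proof (induction fs arbitrary: X rule: length_induct)
  case (1 fs0)
  show ?case
  proof (cases fs0)
  case Nil
  then obtain x where x: "x \<in> X" using 1 by fastforce
  show ?thesis
    by (rule exI[of _ "\<lambda>y. if y \<in> X then 1 else 0"]) (use x Nil in auto)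
next
  case (Cons f fs)
  note IH = 1(1)
  have prems: "finite X" "length (f#fs) < card X" using 1 Cons by auto
  show ?thesis
  proof (cases "\<forall>y\<in>X. f y = 0")
    case True
    from IH[rule_format, of fs X] prems Cons obtain d where
      d: "\<exists>x\<in>X. d x \<noteq> 0" "\<forall>y. y \<notin> X \<longrightarrow> d y = 0" "\<forall>g\<in>set fs. (\<Sum>y\<in>X. g y * d y) = 0"
      by auto
    have "(\<Sum>y\<in>X. f y * d y) = 0" using True by simp
    with d Cons show ?thesis by auto
  next
    case False
    then obtain x0 where x0: "x0 \<in> X" "f x0 \<noteq> 0" by auto
    define X' where "X' = X - {x0}"
    have fX': "finite X'" using prems(1) X'_def by auto
    have cX': "card X' = card X - 1" using x0 prems(1) X'_def by auto
    define fs' where "fs' = map (\<lambda>g y. f x0 * g y - g x0 * f y) fs"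
    have "length fs' < card X'" using prems(2) cX' fs'_def by auto
    from IH[rule_format, of fs' X'] this fX' Cons obtain d' where
      d': "\<exists>x\<in>X'. d' x \<noteq> 0" "\<forall>y. y \<notin> X' \<longrightarrow> d' y = 0"
        "\<forall>g\<in>set fs. (\<Sum>y\<in>X'. (f x0 * g y - g x0 * f y) * d' y) = 0"
      by (auto simp: fs'_def)
    define S where "S = (\<Sum>y\<in>X'. f y * d' y)"
    define d where "d = (\<lambda>y. if y = x0 then - S else f x0 * d' y)"
    have split: "(\<Sum>y\<in>X. g y * d y) = g x0 * d x0 + (\<Sum>y\<in>X'. g y * d y)" for g
      using prems(1) x0 X'_def by (simp add: sum.remove)
    have dX': "(\<Sum>y\<in>X'. g y * d y) = f x0 * (\<Sum>y\<in>X'. g y * d' y)" for g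
      by (auto simp: d_def X'_def sum_distrib_left intro!: sum.cong)
    have "\<forall>g\<in>set (f # fs). (\<Sum>y\<in>X. g y * d y) = 0"
    proof
      fix g assume g: "g \<in> set (f # fs)"
      show "(\<Sum>y\<in>X. g y * d y) = 0"
      proof (cases "g = f")
        case True
        show ?thesis unfolding split dX' True by (simp add: d_def S_def)
      next
        case False
        with g have "g \<in> set fs" by auto
        with d'(3) have "(\<Sum>y\<in>X'. (f x0 * g y - g x0 * f y) * d' y) = 0" by auto
        hence "f x0 * (\<Sum>y\<in>X'. g y * d' y) - g x0 * S = 0"
          by (simp add: S_def sum_distrib_left algebra_simps sum_subtractf)
        then show ?thesis unfolding split dX' by (simp add: d_def algebra_simps)
      qed
    qed
    moreover have "\<exists>x\<in>X. d x \<noteq> 0"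
      using d'(1) x0(2) by (auto simp: d_def X'_def)
    moreover have "\<forall>y. y \<notin> X \<longrightarrow> d y = 0"
      using d'(2) x0 by (auto simp: d_def X'_def)
    ultimately show ?thesis using Cons by blast
  qed
qed
qed

definition coef :: "('r, 'x) monomial \<Rightarrow> 'x \<Rightarrow> int" where
  "coef m y = sum_list (map (\<lambda>(c, x, k). if x = y then k else 0) m)"

lemma degree_coef:
  assumes "finite X" "monomial_vars m \<subseteq> X"
  shows "monomial_degree deg m = (\<Sum>y\<in>X. coef m y * deg y)"
  using assms(2)
proof (induction m)
  case Nil
  then show ?case by (simp add: monomial_degree_def coef_def)
next
  case (Cons a m)
  obtain c x k where a: "a = (c, x, k)" by (cases a) auto
  have xX: "x \<in> X" using Cons.prems a by (auto simp: monomial_vars_def)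
  have IH: "monomial_degree deg m = (\<Sum>y\<in>X. coef m y * deg y)"
    using Cons by (auto simp: monomial_vars_def)
  have "(\<Sum>y\<in>X. coef (a # m) y * deg y)
      = (\<Sum>y\<in>X. (if x = y then k * deg y else 0)) + (\<Sum>y\<in>X. coef m y * deg y)"
    by (simp add: a coef_def sum.distrib[symmetric] algebra_simps, rule sum.cong, auto)
  also have "(\<Sum>y\<in>X. (if x = y then k * deg y else 0)) = k * deg x"
    using assms(1) xX by (simp add: sum.delta)
  finally show ?case using IH by (simp add: a monomial_degree_def)
qed

theorem mainTheorem8:
  fixes X :: "'x set" and sys :: "('r :: ring, 'x) equation list"
  assumes "finite X"
    and "\<forall>e \<in> set sys. \<forall>m \<in> set e. monomial_vars m \<subseteq> X"
    and "(\<Sum>e \<leftarrow> sys. length e - 1) < card X"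
  shows "gen_homogeneous X sys"
proof -
  define fs where "fs = concat (map (\<lambda>e. map (\<lambda>m y. coef m y - coef (hd e) y) (tl e)) sys)"
  have len: "length fs = (\<Sum>e \<leftarrow> sys. length e - 1)"
    unfolding fs_def length_concat by (simp add: comp_def)
  from lin_solve[OF assms(1), of fs] assms(3) len obtain d where
    d: "\<exists>x\<in>X. d x \<noteq> 0" "\<forall>g\<in>set fs. (\<Sum>y\<in>X. g y * d y) = 0" by auto
  have hd: "monomial_degree d m = monomial_degree d (hd e)" if e: "e \<in> set sys" and m: "m \<in> set e" for e m
  proof -
    have ne: "e \<noteq> []" using m by auto
    have vm: "monomial_vars m \<subseteq> X" and vh: "monomial_vars (hd e) \<subseteq> X"
      using assms(2) e m ne by auto
    show ?thesis
    proof (cases "m \<in> set (tl e)")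
      case True
      then have "(\<lambda>y. coef m y - coef (hd e) y) \<in> set fs" using e by (auto simp: fs_def)
      with d(2) have "(\<Sum>y\<in>X. (coef m y - coef (hd e) y) * d y) = 0" by fastforce
      then show ?thesis
        unfolding degree_coef[OF assms(1) vm] degree_coef[OF assms(1) vh]
        by (simp add: algebra_simps sum_subtractf)
    next
      case False
      with m ne have "m = hd e" by (cases e) auto
      then show ?thesis by simp
    qed
  qed
  show ?thesis unfolding gen_homogeneous_def
    using d(1) hd by metis
qed

end
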